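(* Let $\mathcal{P}_1,\dots,\mathcal{P}_k$ be finite posets with $p_j=|\mathcal{P}_j|$, $r\ge1$, and $\mathbf{T}\in\mathbb{R}^{p_1\times\cdots\times p_k}$. Each of the following optimization problems has a minimizer: (1) if all entries of $\mathbf{T}$ are in $\mathbb{R}$: minimize $\Vert\mathbf{T}-\boldsymbol\theta\Vert_F^2$ over $\boldsymbol\theta\in\mathcal{N}_{\le r}$; (2) if all entries of $\mathbf{T}$ are in $\mathbb{N}=\{0,1,2,\dots\}$ and sum to $n$: minimize $-\sum_{i_1,\dots,i_k}T_{i_1\dots i_k}\log(\theta_{i_1\dots i_k})$ over $\boldsymbol\theta\in\mathcal{N}_{\le r}\cap\Delta$, where $\Delta$ is the set of nonnegative tensors with entries summing to one; (3) if all entries of $\mathbf{T}$ are in $\mathbb{N}$: minimize $\sum_{i_1,\dots,i_k}\big(\theta_{i_1\dots i_k}-T_{i_1\dots i_k}\log(\theta_{i_1\dots i_k})\big)$ over $\boldsymbol\theta\in\mathcal{N}_{\le r}$; (4) if all entries of $\mathbf{T}$ are in $(0,\infty)$: minimize $\sum_{i_1,\dots,i_k}\big(\log(\theta_{i_1\dots i_k})+T_{i_1\dots i_k}/\theta_{i_1\dots i_k}\big)$ over $\boldsymbol\theta\in\mathcal{N}_{\le r}$. Here, in (2) and (3) the term $T_{i_1\dots i_k}\log(\theta_{i_1\dots i_k})$ is omitted whenever $T_{i_1\dots i_k}=0$, and objectives are extended to take values in $\mathbb{R}\cup\{\infty\}$ by setting $-T\log(0):=\infty$ and $T/0:=\infty$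 (and $\log 0$ terms so that the objective in (4) is $+\infty$ when some $\theta_{i_1\dots i_k}=0$).
   Context: For a finite poset $\mathcal{Q}$, the order cone $\mathcal{C}(\mathcal{Q})$ is the set of $\mathbf{f}\in\mathbb{R}^{\mathcal{Q}}$ with $f_x\ge0$ for all $x$ and $f_x\le f_y$ whenever $x\preceq y$. $\mathcal{N}_{\le r}$ is the set of tensors of the form $\sum_{i=1}^r\otimes_{j=1}^k\mathbf{v}^{(ij)}$ with $\mathbf{v}^{(ij)}\in\mathcal{C}(\mathcal{P}_j)$ (these have nonnegative entries). $\Vert\cdot\Vert_F$ is the Frobenius norm. These four problems are the maximum likelihood problems for independent Gaussian, multinomial, independent Poisson and independent exponential models with mean tensor $\boldsymbol\theta$. *)

theory Defs
  imports "HOL-Analysis.Analysis" "HOL-Library.Extended_Real"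
begin

definition order_cone :: "'a set \<Rightarrow> 'a rel \<Rightarrow> ('a \<Rightarrow> real) set" where
  "order_cone A R = {f. (\<forall>x\<in>A. 0 \<le> f x) \<and> (\<forall>x\<in>A. \<forall>y\<in>A. (x, y) \<in> R \<longrightarrow> f x \<le> f y)}"

definition tensor_idx :: "nat \<Rightarrow> (nat \<Rightarrow> 'a set) \<Rightarrow> (nat \<Rightarrow> 'a) set" where
  "tensor_idx k P = PiE {..<k} P"

text \<open>N_{<= r}: sums of r outer products of order-cone vectors (only values on the index set matter).\<close>
definition nonneg_rank_le ::
  "nat \<Rightarrow> (nat \<Rightarrow> 'a set) \<Rightarrow> (nat \<Rightarrow> 'a rel) \<Rightarrow> nat \<Rightarrow> ((nat \<Rightarrow> 'a) \<Rightarrow> real) set" where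
  "nonneg_rank_le k P R r = {\<theta>. \<exists>v :: nat \<Rightarrow> nat \<Rightarrow> 'a \<Rightarrow> real.
      (\<forall>i<r. \<forall>j<k. v i j \<in> order_cone (P j) (R j)) \<and>
      (\<forall>x\<in>tensor_idx k P. \<theta> x = (\<Sum>i<r. \<Prod>j<k. v i j (x j)))}"

definition prob_simplex :: "nat \<Rightarrow> (nat \<Rightarrow> 'a set) \<Rightarrow> ((nat \<Rightarrow> 'a) \<Rightarrow> real) set" where
  "prob_simplex k P = {\<theta>. (\<forall>x\<in>tensor_idx k P. 0 \<le> \<theta> x) \<and> (\<Sum>x\<in>tensor_idx k P. \<theta> x) = 1}"

definition has_minimizer :: "('b \<Rightarrow> ereal) \<Rightarrow> 'b set \<Rightarrow> bool" where
  "has_minimizer F S \<longleftrightarrow> (\<exists>\<theta>\<in>S. \<forall>\<theta>'\<in>S. F \<theta> \<le> F \<theta>')"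

definition gauss_obj :: "nat \<Rightarrow> (nat \<Rightarrow> 'a set) \<Rightarrow> ((nat \<Rightarrow> 'a) \<Rightarrow> real) \<Rightarrow> ((nat \<Rightarrow> 'a) \<Rightarrow> real) \<Rightarrow> ereal" where
  "gauss_obj k P T \<theta> = ereal (\<Sum>x\<in>tensor_idx k P. (T x - \<theta> x)\<^sup>2)"

definition neg_T_log :: "real \<Rightarrow> real \<Rightarrow> ereal" where
  "neg_T_log t th = (if t = 0 then 0 else if th = 0 then \<infinity> else ereal (- t * ln th))"

definition multinom_obj :: "nat \<Rightarrow> (nat \<Rightarrow> 'a set) \<Rightarrow> ((nat \<Rightarrow> 'a) \<Rightarrow> real) \<Rightarrow> ((nat \<Rightarrow> 'a) \<Rightarrow> real) \<Rightarrow> ereal" where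
  "multinom_obj k P T \<theta> = (\<Sum>x\<in>tensor_idx k P. neg_T_log (T x) (\<theta> x))"

definition poisson_obj :: "nat \<Rightarrow> (nat \<Rightarrow> 'a set) \<Rightarrow> ((nat \<Rightarrow> 'a) \<Rightarrow> real) \<Rightarrow> ((nat \<Rightarrow> 'a) \<Rightarrow> real) \<Rightarrow> ereal" where
  "poisson_obj k P T \<theta> = (\<Sum>x\<in>tensor_idx k P. ereal (\<theta> x) + neg_T_log (T x) (\<theta> x))"

definition expon_obj :: "nat \<Rightarrow> (nat \<Rightarrow> 'a set) \<Rightarrow> ((nat \<Rightarrow> 'a) \<Rightarrow> real) \<Rightarrow> ((nat \<Rightarrow> 'a) \<Rightarrow> real) \<Rightarrow> ereal" where
  "expon_obj k P T \<theta> = (\<Sum>x\<in>tensor_idx k P.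
      (if \<theta> x = 0 then \<infinity> else ereal (ln (\<theta> x) + T x / \<theta> x)))"

end

theory Submission
  imports Defs "HOL-Real_Asymp.Real_Asymp"
begin


lemma compact_box:
  fixes S :: "'i \<Rightarrow> real set"
  assumes "\<And>i. compact (S i)"
  shows "compact (PiE UNIV S)"
proof -
  have "compactin (product_topology (\<lambda>i. euclidean) UNIV) (PiE UNIV S)"
    using assms by (simp add: compactin_PiE)
  then show ?thesis by (simp add: euclidean_product_topology)
qed

lemma cont_ext:
  fixes f :: "real \<Rightarrow> real"
  assumes c: "continuous_on {0<..} f" and l: "filterlim f at_top (at_right 0)"
  shows "continuous_on {0..} (\<lambda>t. if t = 0 then \<infinity> else ereal (f t))"
  unfolding continuous_on_def
proof (intro ballI)
  fix t :: real assume t: "t \<in> {0..}"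
  show "((\<lambda>t. if t = 0 then \<infinity> else ereal (f t)) \<longlongrightarrow> (if t = 0 then \<infinity> else ereal (f t))) (at t within {0..})"
  proof (cases "t = 0")
    case True
    have "((\<lambda>z. ereal (f z)) \<longlongrightarrow> \<infinity>) (at_right 0)" using l by (simp add: tendsto_PInfty_eq_at_top)
    then have "((\<lambda>z. if z = 0 then \<infinity> else ereal (f z)) \<longlongrightarrow> \<infinity>) (at_right 0)"
      by (rule tendsto_cong[THEN iffD1, rotated]) (auto simp: eventually_at_filter)
    then show ?thesis using True by (simp add: at_within_Ici_at_right)
  next
    case False
    then have tp: "t > 0" using t by auto
    have "isCont f t" using c tp by (simp add: continuous_on_eq_continuous_at)
    then have "(f \<longlongrightarrow> f t) (at t within {0..})" using isCont_def tendsto_within_subset by blast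
    then have L: "((\<lambda>z. ereal (f z)) \<longlongrightarrow> ereal (f t)) (at t within {0..})" by (rule tendsto_ereal)
    have E: "eventually (\<lambda>z. z \<noteq> 0) (at t within {0..})"
    proof -
      have "eventually (\<lambda>z. z \<in> {0<..}) (at t)" using tp by (intro eventually_at_in_open') auto
      then show ?thesis by (auto simp: eventually_at_filter elim: eventually_mono)
    qed
    have "((\<lambda>z. if z = 0 then \<infinity> else ereal (f z)) \<longlongrightarrow> ereal (f t)) (at t within {0..})"
      using L by (rule tendsto_cong[THEN iffD1, rotated]) (use E in \<open>auto elim: eventually_mono\<close>)
    then show ?thesis using False by simp
  qed
qed

lemma sum_not_MInf:
  fixes f :: "'x \<Rightarrow> ereal"
  assumes "\<And>x. x \<in> I \<Longrightarrow> f x \<noteq> -\<infinity>"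
  shows "sum f I \<noteq> -\<infinity>"
  using assms
proof (induction I rule: infinite_finite_induct)
  case (insert x F)
  then show ?case by (simp add: sum.insert)
qed auto

lemma cont_sum_ereal:
  fixes g :: "'x \<Rightarrow> real \<Rightarrow> ereal" and h :: "'x \<Rightarrow> 'w::topological_space \<Rightarrow> real"
  assumes "finite I" "\<And>x. x\<in>I \<Longrightarrow> continuous_on {0..} (g x)"
    "\<And>x. x\<in>I \<Longrightarrow> continuous_on K (h x)" "\<And>x w. x\<in>I \<Longrightarrow> w\<in>K \<Longrightarrow> h x w \<ge> 0"
    "\<And>x t. x\<in>I \<Longrightarrow> g x t \<noteq> -\<infinity>"
  shows "continuous_on K (\<lambda>w. \<Sum>x\<in>I. g x (h x w))"
  using assms
proof (induction I rule: finite_induct)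
  case empty
  then show ?case by simp
next
  case (insert y F)
  have c1: "continuous_on K (\<lambda>w. g y (h y w))"
    by (rule continuous_on_compose2[of "{0..}" "g y" K "h y"]) (use insert in auto)
  have c2: "continuous_on K (\<lambda>w. \<Sum>x\<in>F. g x (h x w))" using insert by auto
  show ?case unfolding sum.insert[OF insert(1,2)] continuous_on_def
  proof
    fix w assume w: "w \<in> K"
    show "((\<lambda>w. g y (h y w) + (\<Sum>x\<in>F. g x (h x w))) \<longlongrightarrow> g y (h y w) + (\<Sum>x\<in>F. g x (h x w))) (at w within K)"
    proof (rule tendsto_add_ereal_general)
      show "((\<lambda>w. g y (h y w)) \<longlongrightarrow> g y (h y w)) (at w within K)" using c1 w by (simp add: continuous_on_def)
      show "((\<lambda>w. \<Sum>x\<in>F. g x (h x w)) \<longlongrightarrow> (\<Sum>x\<in>F. g x (h x w))) (at w within K)" using c2 w by (simp add: continuous_on_def)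
      have "(\<Sum>x\<in>F. g x (h x w)) \<noteq> -\<infinity>" by (rule sum_not_MInf) (use insert in auto)
      moreover have "g y (h y w) \<noteq> -\<infinity>" using insert by auto
      ultimately show "\<not> ((g y (h y w) = \<infinity> \<and> (\<Sum>x\<in>F. g x (h x w)) = - \<infinity>) \<or> (g y (h y w) = - \<infinity> \<and> (\<Sum>x\<in>F. g x (h x w)) = \<infinity>))"
        by auto
    qed
  qed
qed

lemma lim_negln:
  fixes c :: real assumes "c > 0"
  shows "filterlim (\<lambda>t. - c * ln t) at_top (at_right 0)"
  using assms by real_asymp

lemma lim_expo:
  fixes c :: real assumes "c > 0"
  shows "filterlim (\<lambda>t. ln t + c / t) at_top (at_right 0)"
  using assms by real_asymp



definition Phi :: "nat \<Rightarrow> nat \<Rightarrow> (nat \<times> nat \<times> 'a \<Rightarrow> real) \<Rightarrow> (nat \<Rightarrow> 'a) \<Rightarrow> real" where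
  "Phi k r w x = (\<Sum>i<r. \<Prod>j<k. w (i, j, x j))"

definition Kset :: "nat \<Rightarrow> nat \<Rightarrow> (nat \<Rightarrow> 'a set) \<Rightarrow> (nat \<Rightarrow> 'a rel) \<Rightarrow> real \<Rightarrow> (nat \<times> nat \<times> 'a \<Rightarrow> real) set" where
  "Kset k r P R M = {w. (\<forall>i j a. (i<r \<and> j<k \<and> a\<in>P j) \<longrightarrow> 0 \<le> w (i,j,a) \<and> w (i,j,a) \<le> M)
     \<and> (\<forall>i j a. \<not>(i<r \<and> j<k \<and> a\<in>P j) \<longrightarrow> w (i,j,a) = 0)
     \<and> (\<forall>i j a b. i<r \<longrightarrow> j<k \<longrightarrow> a\<in>P j \<longrightarrow> b\<in>P j \<longrightarrow> (a,b)\<in>R j \<longrightarrow> w (i,j,a) \<le> w (i,j,b))}"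

lemma represent:
  fixes \<theta> :: "(nat \<Rightarrow> 'a) \<Rightarrow> real"
  assumes k: "k \<ge> 1" and fin: "\<And>j. j<k \<Longrightarrow> finite (P j)" and ne: "\<And>j. j<k \<Longrightarrow> P j \<noteq> {}"
    and th: "\<theta> \<in> nonneg_rank_le k P R r" and bd: "\<forall>x\<in>tensor_idx k P. \<theta> x \<le> M" and M: "M \<ge> 1"
  shows "\<exists>w\<in>Kset k r P R M. \<forall>x\<in>tensor_idx k P. Phi k r w x = \<theta> x"
proof -
  obtain v :: "nat \<Rightarrow> nat \<Rightarrow> 'a \<Rightarrow> real" where v: "\<forall>i<r. \<forall>j<k. v i j \<in> order_cone (P j) (R j)"
    and tv: "\<forall>x\<in>tensor_idx k P. \<theta> x = (\<Sum>i<r. \<Prod>j<k. v i j (x j))"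
    using th unfolding nonneg_rank_le_def by blast
  define m where "m i j = Max (v i j ` P j)" for i j
  define c where "c i = (\<Prod>j\<in>{1..<k}. m i j)" for i
  define w where "w = (\<lambda>(i,j,a). if i<r \<and> j<k \<and> a\<in>P j then (if c i = 0 then 0 else if j = 0 then v i 0 a * c i else v i j a / m i j) else 0)"
  have vnn: "0 \<le> v i j a" if "i<r" "j<k" "a\<in>P j" for i j a
    using v that unfolding order_cone_def by blast
  have vmono: "v i j a \<le> v i j b" if "i<r" "j<k" "a\<in>P j" "b \<in> P j" "(a,b)\<in>R j" for i j a b
    using v that unfolding order_cone_def by blast
  have vle: "v i j a \<le> m i j" if "i<r" "j<k" "a\<in>P j" for i j a
    unfolding m_def using fin that by (intro Max_ge) auto
  have mex: "\<exists>b\<in>P j. v i j b = m i j" if "i<r" "j<k" for i j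
  proof -
    have "m i j \<in> v i j ` P j" unfolding m_def using fin ne that by (intro Max_in) auto
    then show ?thesis by auto
  qed
  have mnn: "0 \<le> m i j" if "i<r" "j<k" for i j
    using mex[OF that] vnn that by metis
  have cnn: "0 \<le> c i" if "i<r" for i
    unfolding c_def using mnn that by (intro prod_nonneg) auto
  have xin: "x j \<in> P j" if "x \<in> tensor_idx k P" "j<k" for x j
    using that unfolding tensor_idx_def by (auto simp: PiE_iff)
  have split: "(\<Prod>j<k. f j) = f 0 * (\<Prod>j\<in>{1..<k}. f j)" for f :: "nat \<Rightarrow> real"
  proof -
    have "{..<k} = insert 0 {1..<k}" using k by auto
    then show ?thesis by simp
  qed
  have prod_eq: "(\<Prod>j<k. w (i,j,x j)) = (\<Prod>j<k. v i j (x j))" if i: "i<r" and x: "x \<in> tensor_idx k P" for i x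
  proof (cases "c i = 0")
    case True
    then obtain j where j: "j \<in> {1..<k}" "m i j = 0" unfolding c_def by auto
    then have "v i j (x j) = 0" using vnn[of i j "x j"] vle[of i j "x j"] xin[OF x, of j] i by auto
    then have "(\<Prod>j<k. v i j (x j)) = 0" using j by (subst prod_zero_iff) auto
    moreover have "(\<Prod>j<k. w (i,j,x j)) = 0" using True k by (subst prod_zero_iff) (auto simp: w_def intro!: exI[of _ 0])
    ultimately show ?thesis by (simp only:)
  next
    case False
    then have mnz: "m i j \<noteq> 0" if "j \<in> {1..<k}" for j using that unfolding c_def by auto
    have "(\<Prod>j<k. w (i,j,x j)) = v i 0 (x 0) * c i * (\<Prod>j\<in>{1..<k}. v i j (x j) / m i j)"
      unfolding split[of "\<lambda>j. w (i,j,x j)"] using False i k xin[OF x]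
      by (intro arg_cong2[where f="(*)"] prod.cong) (auto simp: w_def)
    also have "\<dots> = v i 0 (x 0) * (\<Prod>j\<in>{1..<k}. m i j * (v i j (x j) / m i j))"
      unfolding c_def prod.distrib by simp
    also have "\<dots> = v i 0 (x 0) * (\<Prod>j\<in>{1..<k}. v i j (x j))"
      using mnz by (intro arg_cong2[where f="(*)"] prod.cong) auto
    also have "\<dots> = (\<Prod>j<k. v i j (x j))" unfolding split[of "\<lambda>j. v i j (x j)"] ..
    finally show ?thesis .
  qed
  have "\<forall>x\<in>tensor_idx k P. Phi k r w x = \<theta> x"
    using prod_eq tv unfolding Phi_def by simp
  moreover have "w \<in> Kset k r P R M"
  proof -
    have b: "0 \<le> w (i,j,a) \<and> w (i,j,a) \<le> M" if "i<r" "j<k" "a\<in>P j" for i j a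
    proof (cases "c i = 0")
      case True then show ?thesis using that M by (simp add: w_def)
    next
      case False
      then have mnz: "m i j \<noteq> 0" if "j \<in> {1..<k}" for j using that unfolding c_def by auto
      show ?thesis
      proof (cases "j = 0")
        case False
        have "m i j \<noteq> 0" using mnz False that by simp
        then have "m i j > 0" using mnn[of i j] that by linarith
        then have "v i j a / m i j \<le> 1" "0 \<le> v i j a / m i j" using vle vnn that by auto
        then show ?thesis using False \<open>c i \<noteq> 0\<close> that M by (simp add: w_def)
      next
        case True
        define y where "y = (\<lambda>j. SOME b. b \<in> P j \<and> v i j b = m i j)"
        have y: "y j \<in> P j \<and> v i j (y j) = m i j" if "j < k" for j
          unfolding y_def using mex[OF \<open>i<r\<close> that] by (metis (mono_tags, lifting) someI_ex)
        define x where "x = restrict (\<lambda>j. if j = 0 then a else y j) {..<k}"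
        have x: "x \<in> tensor_idx k P" unfolding tensor_idx_def x_def using y that True by auto
        have "v i 0 a * c i = (\<Prod>j<k. v i j (x j))"
          unfolding split[of "\<lambda>j. v i j (x j)"] c_def using k y
          by (intro arg_cong2[where f="(*)"] prod.cong) (auto simp: x_def)
        also have "\<dots> \<le> (\<Sum>i<r. \<Prod>j<k. v i j (x j))"
          using that vnn xin[OF x] by (intro member_le_sum prod_nonneg) auto
        also have "\<dots> = \<theta> x" using tv x by simp
        also have "\<dots> \<le> M" using bd x by simp
        finally show ?thesis using True that \<open>c i \<noteq> 0\<close> vnn cnn by (simp add: w_def)
      qed
    qed
    have o: "w (i,j,a) \<le> w (i,j,b)" if "i<r" "j<k" "a\<in>P j" "b\<in>P j" "(a,b)\<in>R j" for i j a b
      using vmono[OF that] that cnn[of i] mnn[of i j]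
      by (auto simp: w_def intro: mult_right_mono divide_right_mono)
    show ?thesis unfolding Kset_def using b o by (auto simp: w_def)
  qed
  ultimately show ?thesis by blast
qed

lemma Phi_in_N:
  assumes "w \<in> Kset k r P R M"
  shows "Phi k r w \<in> nonneg_rank_le k P R r"
  unfolding nonneg_rank_le_def
proof (intro CollectI exI[of _ "\<lambda>i j a. w (i,j,a)"] conjI)
  show "\<forall>i<r. \<forall>j<k. (\<lambda>a. w (i, j, a)) \<in> order_cone (P j) (R j)"
    using assms unfolding Kset_def order_cone_def by auto
  show "\<forall>x\<in>tensor_idx k P. Phi k r w x = (\<Sum>i<r. \<Prod>j<k. w (i, j, x j))"
    by (simp add: Phi_def)
qed

lemma N_nonneg:
  assumes "\<theta> \<in> nonneg_rank_le k P R r" "x \<in> tensor_idx k P"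
  shows "0 \<le> \<theta> x"
proof -
  obtain v :: "nat \<Rightarrow> nat \<Rightarrow> 'a \<Rightarrow> real" where v: "\<forall>i<r. \<forall>j<k. v i j \<in> order_cone (P j) (R j)"
    and tv: "\<forall>x\<in>tensor_idx k P. \<theta> x = (\<Sum>i<r. \<Prod>j<k. v i j (x j))"
    using assms(1) unfolding nonneg_rank_le_def by blast
  have "x j \<in> P j" if "j < k" for j using assms(2) that unfolding tensor_idx_def by (auto simp: PiE_iff)
  then show ?thesis using v tv assms(2) unfolding order_cone_def
    by (auto intro!: sum_nonneg prod_nonneg)
qed

lemma compact_Kset: "compact (Kset k r P R M)"
proof -
  define S where "S = (\<lambda>(i,j,a). if i<r \<and> j<k \<and> a\<in>P j then {0..M} else {0::real})"
  define C where "C = {w :: nat \<times> nat \<times> 'a \<Rightarrow> real. \<forall>i j a b. i<r \<longrightarrow> j<k \<longrightarrow> a\<in>P j \<longrightarrow> b\<in>P j \<longrightarrow> (a,b)\<in>R j \<longrightarrow> w (i,j,a) \<le> w (i,j,b)}"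
  have "Kset k r P R M = PiE UNIV S \<inter> C"
    unfolding Kset_def C_def S_def by (auto simp: PiE_iff split: if_splits)
  moreover have "compact (PiE UNIV S)"
  proof -
    have "compactin (product_topology (\<lambda>i. euclidean) UNIV) (PiE UNIV S)"
      by (subst compactin_PiE) (auto simp: S_def)
    then show ?thesis by (simp add: euclidean_product_topology)
  qed
  moreover have "closed C"
    unfolding C_def
    by (intro closed_Collect_all closed_Collect_imp closed_Collect_le continuous_on_product_coordinates) auto
  ultimately show ?thesis by (simp add: compact_Int_closed)
qed

lemma cont_Phi: "continuous_on UNIV (\<lambda>w. Phi k r w x)"
  unfolding Phi_def by (intro continuous_intros continuous_on_product_coordinates)

lemma Phi_nonneg:
  assumes "w \<in> Kset k r P R M" "x \<in> tensor_idx k P"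
  shows "0 \<le> Phi k r w x"
  using N_nonneg[OF Phi_in_N[OF assms(1)] assms(2)] .

lemma const_in_K:
  assumes k: "k \<ge> 1" and r: "r \<ge> 1" and c: "0 \<le> c" "c \<le> M" and M: "1 \<le> M"
  shows "\<exists>w\<in>Kset k r P R M. \<forall>x\<in>tensor_idx k P. Phi k r w x = c"
proof
  define w where "w = (\<lambda>(i::nat,j,a). if i = 0 \<and> j<k \<and> a\<in>P j then (if j = 0 then c else 1) else (0::real))"
  show "w \<in> Kset k r P R M" unfolding Kset_def w_def using c M r by auto
  show "\<forall>x\<in>tensor_idx k P. Phi k r w x = c"
  proof
    fix x assume x: "x \<in> tensor_idx k P"
    have xin: "x j \<in> P j" if "j < k" for j using x that unfolding tensor_idx_def by (auto simp: PiE_iff)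
    have p: "(\<Prod>j<k. w (i, j, x j)) = (if i = 0 then c else 0)" for i
    proof (cases "i = 0")
      case True
      have "{..<k} = insert 0 {1..<k}" using k by auto
      then show ?thesis using True xin xin[of 0] k by (simp add: w_def)
    next
      case False
      then show ?thesis using k by (simp add: prod_zero_iff w_def)
    qed
    show "Phi k r w x = c" unfolding Phi_def p using r by simp
  qed
qed

lemma min_via_compact:
  fixes F :: "'t \<Rightarrow> ereal" and \<Phi> :: "'w::topological_space \<Rightarrow> 't"
  assumes "compact K" "K \<noteq> {}" "continuous_on K (\<lambda>w. F (\<Phi> w))" "\<Phi> ` K \<subseteq> S"
    "\<forall>\<theta>\<in>S. \<exists>w\<in>K. F (\<Phi> w) \<le> F \<theta>"
  shows "has_minimizer F S"
proof -
  obtain w0 where w0: "w0 \<in> K" "\<forall>w\<in>K. F (\<Phi> w0) \<le> F (\<Phi> w)"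
    using continuous_attains_inf[OF assms(1,2,3)] by blast
  show ?thesis unfolding has_minimizer_def
  proof (intro bexI ballI)
    show "\<Phi> w0 \<in> S" using w0(1) assms(4) by blast
    fix t assume "t \<in> S"
    then obtain w where "w \<in> K" "F (\<Phi> w) \<le> F t" using assms(5) by blast
    then show "F (\<Phi> w0) \<le> F t" using w0(2) order_trans by blast
  qed
qed


lemma negTlog_cont:
  assumes "c \<ge> 0"
  shows "continuous_on {0..} (neg_T_log c)"
proof (cases "c = 0")
  case True
  then have "neg_T_log c = (\<lambda>t. 0)" by (auto simp: neg_T_log_def)
  then show ?thesis by simp
next
  case False
  then have cp: "c > 0" using assms by simp
  have e: "neg_T_log c = (\<lambda>t. if t = 0 then \<infinity> else ereal (- c * ln t))"
    using False by (auto simp: neg_T_log_def)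
  have "continuous_on {0<..} (\<lambda>t::real. - c * ln t)"
    by (intro continuous_intros) auto
  then show ?thesis unfolding e using cont_ext lim_negln[OF cp] by blast
qed

lemma negTlog_nMInf: "neg_T_log c t \<noteq> -\<infinity>"
  by (simp add: neg_T_log_def)

lemma poisson_cont:
  assumes "c \<ge> 0"
  shows "continuous_on {0..} (\<lambda>t. ereal t + neg_T_log c t)"
  unfolding continuous_on_def
proof
  fix t :: real assume t: "t \<in> {0..}"
  have a: "((\<lambda>t. ereal t) \<longlongrightarrow> ereal t) (at t within {0..})" by (intro tendsto_intros)
  have b: "(neg_T_log c \<longlongrightarrow> neg_T_log c t) (at t within {0..})"
    using negTlog_cont[OF assms] t by (simp add: continuous_on_def)
  show "((\<lambda>t. ereal t + neg_T_log c t) \<longlongrightarrow> ereal t + neg_T_log c t) (at t within {0..})"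
    by (rule tendsto_add_ereal_general2[OF _ a b]) simp
qed

lemma expo_cont:
  assumes "c > 0"
  shows "continuous_on {0..} (\<lambda>t. if t = 0 then \<infinity> else ereal (ln t + c / t))"
proof -
  have "continuous_on {0<..} (\<lambda>t::real. ln t + c / t)"
    by (intro continuous_intros) auto
  then show ?thesis using cont_ext lim_expo[OF assms] by blast
qed

lemma poisson_lb:
  fixes c t :: real assumes c: "c \<ge> 0" and t: "t \<ge> 0"
  shows "ereal (t/2 - 2 * c^2) \<le> ereal t + neg_T_log c t"
proof (cases "c = 0")
  case True then show ?thesis using t by (simp add: neg_T_log_def)
next
  case False
  then have cp: "c > 0" using c by simp
  show ?thesis
  proof (cases "t = 0")
    case True then show ?thesis using False by (simp add: neg_T_log_def)
  next
    case False
    then have tp: "t > 0" using t by simp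
    have "ln (t / (2*c)) \<le> t / (2*c) - 1" using tp cp by (intro ln_le_minus_one) auto
    moreover have "ln (t / (2*c)) = ln t - ln (2*c)" using tp cp by (simp add: ln_div)
    moreover have "ln (2*c) \<le> 2*c - 1" using cp by (intro ln_le_minus_one) auto
    ultimately have "ln t \<le> t/(2*c) + 2*c - 2" by linarith
    then have "c * ln t \<le> c * (t/(2*c) + 2*c - 2)" using cp by (intro mult_left_mono) auto
    also have "\<dots> = t/2 + 2*c^2 - 2*c" using cp by (simp add: field_simps power2_eq_square)
    finally have "t/2 - 2*c^2 \<le> t + - c * ln t" using cp by linarith
    then show ?thesis using \<open>c \<noteq> 0\<close> False by (simp add: neg_T_log_def)
  qed
qed

lemma expo_lb:
  fixes c t :: real assumes c: "c > 0" and t: "t > 0"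
  shows "ln c + 1 \<le> ln t + c / t"
proof -
  have "ln (c / t) \<le> c / t - 1" using c t by (intro ln_le_minus_one) auto
  moreover have "ln (c / t) = ln c - ln t" using c t by (simp add: ln_div)
  ultimately show ?thesis by linarith
qed

theorem lemma9:
  fixes k r :: nat and P :: "nat \<Rightarrow> 'a set" and R :: "nat \<Rightarrow> 'a rel"
    and T :: "(nat \<Rightarrow> 'a) \<Rightarrow> real"
  assumes k: "k \<ge> 1" and r: "r \<ge> 1"
    and fin: "\<And>j. j < k \<Longrightarrow> finite (P j)"
    and ne: "\<And>j. j < k \<Longrightarrow> P j \<noteq> {}"
    and po: "\<And>j. j < k \<Longrightarrow> partial_order_on (P j) (R j)"
  shows "has_minimizer (gauss_obj k P T) (nonneg_rank_le k P R r)
    \<and> (\<forall>n::nat. (\<forall>x\<in>tensor_idx k P. T x \<in> \<nat>) \<and> (\<Sum>x\<in>tensor_idx k P. T x) = real n \<longrightarrow>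
          has_minimizer (multinom_obj k P T) (nonneg_rank_le k P R r \<inter> prob_simplex k P))
    \<and> ((\<forall>x\<in>tensor_idx k P. T x \<in> \<nat>) \<longrightarrow>
          has_minimizer (poisson_obj k P T) (nonneg_rank_le k P R r))
    \<and> ((\<forall>x\<in>tensor_idx k P. 0 < T x) \<longrightarrow>
          has_minimizer (expon_obj k P T) (nonneg_rank_le k P R r))"
proof -
  define I where "I = tensor_idx k P"
  define N where "N = nonneg_rank_le k P R r"
  have Ifin: "finite I" unfolding I_def tensor_idx_def using fin by (intro finite_PiE) auto
  have Ine: "I \<noteq> {}" unfolding I_def tensor_idx_def using ne by (simp add: PiE_eq_empty_iff)
  have Icard: "card I > 0" using Ifin Ine by (simp add: card_gt_0_iff)
  have Nnn: "0 \<le> \<theta> x" if "\<theta> \<in> N" "x \<in> I" for \<theta> x using N_nonneg that unfolding N_def I_def by blast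
  have PhiN: "Phi k r w \<in> N" if "w \<in> Kset k r P R M" for w M using Phi_in_N that unfolding N_def by blast
  have Phinn: "\<And>x w. x \<in> I \<Longrightarrow> w \<in> Kset k r P R M \<Longrightarrow> 0 \<le> Phi k r w x" for M
    using Phi_nonneg unfolding I_def by blast
  have contPhi: "\<And>x. x \<in> I \<Longrightarrow> continuous_on K (\<lambda>w. Phi k r w x)" for K :: "(nat \<times> nat \<times> 'a \<Rightarrow> real) set"
    using cont_Phi continuous_on_subset by blast
  have repr: "\<exists>w\<in>Kset k r P R M. \<forall>x\<in>I. Phi k r w x = \<theta> x"
    if "\<theta> \<in> N" "\<forall>x\<in>I. \<theta> x \<le> M" "M \<ge> 1" for \<theta> M
    using represent[where k=k and P=P and R=R and r=r, OF k fin ne] that unfolding N_def I_def by blast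
  have const: "\<exists>w\<in>Kset k r P R M. \<forall>x\<in>I. Phi k r w x = c" if "0 \<le> c" "c \<le> M" "1 \<le> M" for c M
    using const_in_K[OF k r that] unfolding I_def by blast
  have natnn: "0 \<le> z" if "z \<in> (\<nat> :: real set)" for z using that by (auto elim: Nats_cases)

  have part1: "has_minimizer (gauss_obj k P T) N"
  proof -
    define A where "A = (\<Sum>x\<in>I. \<bar>T x\<bar>)"
    define B where "B = (\<Sum>x\<in>I. (T x)^2)"
    define M where "M = A + B + 1"
    have A0: "A \<ge> 0" unfolding A_def by (intro sum_nonneg) auto
    have B0: "B \<ge> 0" unfolding B_def by (intro sum_nonneg) auto
    have M1: "M \<ge> 1" using A0 B0 by (simp add: M_def)
    have Feq: "gauss_obj k P T \<theta> = gauss_obj k P T \<theta>'" if "\<forall>x\<in>I. \<theta> x = \<theta>' x" for \<theta> \<theta>'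
      unfolding gauss_obj_def I_def[symmetric] using that by simp
    show ?thesis
    proof (rule min_via_compact[where K = "Kset k r P R M" and \<Phi> = "Phi k r"])
      show "compact (Kset k r P R M)" by (rule compact_Kset)
      show "Kset k r P R M \<noteq> {}" using const[of 0 M] M1 by auto
      show "Phi k r ` Kset k r P R M \<subseteq> N" using PhiN by blast
      have e: "(\<lambda>w. gauss_obj k P T (Phi k r w)) = (\<lambda>w. \<Sum>x\<in>I. (\<lambda>x t. ereal ((T x - t)^2)) x (Phi k r w x))"
        unfolding gauss_obj_def I_def by simp
      show "continuous_on (Kset k r P R M) (\<lambda>w. gauss_obj k P T (Phi k r w))"
        unfolding e by (rule cont_sum_ereal[OF Ifin _ contPhi Phinn]) (auto intro!: continuous_intros)
      show "\<forall>\<theta>\<in>N. \<exists>w\<in>Kset k r P R M. gauss_obj k P T (Phi k r w) \<le> gauss_obj k P T \<theta>"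
      proof
        fix \<theta> assume th: "\<theta> \<in> N"
        show "\<exists>w\<in>Kset k r P R M. gauss_obj k P T (Phi k r w) \<le> gauss_obj k P T \<theta>"
        proof (cases "\<forall>x\<in>I. \<theta> x \<le> M")
          case True
          then obtain w where "w \<in> Kset k r P R M" "\<forall>x\<in>I. Phi k r w x = \<theta> x" using repr th M1 by blast
          then show ?thesis using Feq by (metis order_refl)
        next
          case False
          then obtain x0 where x0: "x0 \<in> I" "\<theta> x0 > M" by (auto simp: not_le)
          obtain w where w: "w \<in> Kset k r P R M" "\<forall>x\<in>I. Phi k r w x = 0" using const[of 0 M] M1 by auto
          have "gauss_obj k P T (Phi k r w) = ereal B"
            unfolding gauss_obj_def B_def I_def[symmetric] using w by simp
          also have "B \<le> (\<theta> x0 - T x0)^2"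
          proof -
            have "\<bar>T x0\<bar> \<le> A" unfolding A_def using Ifin x0 by (intro member_le_sum) auto
            then have "B + 1 \<le> \<theta> x0 - T x0" using x0 unfolding M_def by linarith
            then have "(B+1)^2 \<le> (\<theta> x0 - T x0)^2" using B0 by (intro power_mono) auto
            moreover have "B \<le> (B+1)^2"
            proof -
              have "(B+1)^2 = B*B + 2*B + 1" by (simp add: power2_eq_square algebra_simps)
              moreover have "0 \<le> B*B" by simp
              ultimately show ?thesis using B0 by linarith
            qed
            ultimately show ?thesis by linarith
          qed
          then have "ereal B \<le> ereal ((T x0 - \<theta> x0)^2)" by (simp add: power2_commute)
          also have "(T x0 - \<theta> x0)^2 \<le> (\<Sum>x\<in>I. (T x - \<theta> x)^2)"
            using Ifin x0 by (intro member_le_sum) auto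
          then have "ereal ((T x0 - \<theta> x0)^2) \<le> gauss_obj k P T \<theta>"
            unfolding gauss_obj_def I_def[symmetric] by simp
          finally show ?thesis using w by blast
        qed
      qed
    qed
  qed

  have part2: "has_minimizer (multinom_obj k P T) (N \<inter> prob_simplex k P)"
    if Tn: "\<forall>x\<in>I. T x \<in> \<nat>" for n :: nat
  proof -
    define K where "K = Kset k r P R 1 \<inter> {w. Phi k r w \<in> prob_simplex k P}"
    have Feq: "multinom_obj k P T \<theta> = multinom_obj k P T \<theta>'" if "\<forall>x\<in>I. \<theta> x = \<theta>' x" for \<theta> \<theta>'
      unfolding multinom_obj_def I_def[symmetric] using that by simp
    have Seq: "\<theta> \<in> prob_simplex k P \<longleftrightarrow> \<theta>' \<in> prob_simplex k P" if "\<forall>x\<in>I. \<theta> x = \<theta>' x" for \<theta> \<theta>'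
      unfolding prob_simplex_def I_def[symmetric] using that by simp
    show ?thesis
    proof (rule min_via_compact[where K = K and \<Phi> = "Phi k r"])
      have "{w. Phi k r w \<in> prob_simplex k P} = (\<Inter>x\<in>I. {w. 0 \<le> Phi k r w x}) \<inter> {w. (\<Sum>x\<in>I. Phi k r w x) = 1}"
        unfolding prob_simplex_def I_def by auto
      moreover have "closed \<dots>"
        by (intro closed_Int closed_INT ballI closed_Collect_le closed_Collect_eq continuous_intros cont_Phi) 
      ultimately have "closed {w. Phi k r w \<in> prob_simplex k P}" by simp
      then show "compact K" unfolding K_def using compact_Kset by (intro compact_Int_closed)
      obtain w where w: "w \<in> Kset k r P R 1" "\<forall>x\<in>I. Phi k r w x = 1 / card I"
        using const[of "1 / card I" 1] Icard by auto
      have "Phi k r w \<in> prob_simplex k P"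
        unfolding prob_simplex_def I_def[symmetric] using w Icard by simp
      then show "K \<noteq> {}" using w unfolding K_def by blast
      show "Phi k r ` K \<subseteq> N \<inter> prob_simplex k P" using PhiN unfolding K_def by blast
      have e: "(\<lambda>w. multinom_obj k P T (Phi k r w)) = (\<lambda>w. \<Sum>x\<in>I. (\<lambda>x. neg_T_log (T x)) x (Phi k r w x))"
        unfolding multinom_obj_def I_def by simp
      show "continuous_on K (\<lambda>w. multinom_obj k P T (Phi k r w))"
        unfolding e
      proof (rule cont_sum_ereal[OF Ifin _ contPhi])
        show "\<And>x. x \<in> I \<Longrightarrow> continuous_on {0..} (neg_T_log (T x))" using Tn natnn negTlog_cont by blast
        show "\<And>x w. x \<in> I \<Longrightarrow> w \<in> K \<Longrightarrow> 0 \<le> Phi k r w x" using Phinn unfolding K_def by blast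
      qed (auto simp: negTlog_nMInf)
      show "\<forall>\<theta>\<in>N \<inter> prob_simplex k P. \<exists>w\<in>K. multinom_obj k P T (Phi k r w) \<le> multinom_obj k P T \<theta>"
      proof
        fix \<theta> assume th: "\<theta> \<in> N \<inter> prob_simplex k P"
        have "\<theta> x \<le> 1" if x: "x \<in> I" for x
        proof -
          have "\<theta> x \<le> (\<Sum>x\<in>I. \<theta> x)" using th Ifin x Nnn by (intro member_le_sum) auto
          also have "\<dots> = 1" using th unfolding prob_simplex_def I_def by simp
          finally show ?thesis .
        qed
        then obtain w where w: "w \<in> Kset k r P R 1" "\<forall>x\<in>I. Phi k r w x = \<theta> x" using repr th by force
        then have "w \<in> K" using Seq th unfolding K_def by blast
        then show "\<exists>w\<in>K. multinom_obj k P T (Phi k r w) \<le> multinom_obj k P T \<theta>"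
          using Feq w by (metis order_refl)
      qed
    qed
  qed

  have part3: "has_minimizer (poisson_obj k P T) N"
    if Tn: "\<forall>x\<in>I. T x \<in> \<nat>"
  proof -
    define B where "B = (\<Sum>x\<in>I. (T x)^2)"
    define M where "M = 2 * real (card I) + 4 * B + 1"
    have B0: "B \<ge> 0" unfolding B_def by (intro sum_nonneg) auto
    have M1: "M \<ge> 1" using B0 by (simp add: M_def)
    have Tnn: "0 \<le> T x" if "x \<in> I" for x using Tn natnn that by blast
    have Feq: "poisson_obj k P T \<theta> = poisson_obj k P T \<theta>'" if "\<forall>x\<in>I. \<theta> x = \<theta>' x" for \<theta> \<theta>'
      unfolding poisson_obj_def I_def[symmetric] using that by simp
    show ?thesis
    proof (rule min_via_compact[where K = "Kset k r P R M" and \<Phi> = "Phi k r"])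
      show "compact (Kset k r P R M)" by (rule compact_Kset)
      show "Kset k r P R M \<noteq> {}" using const[of 0 M] M1 by auto
      show "Phi k r ` Kset k r P R M \<subseteq> N" using PhiN by blast
      have e: "(\<lambda>w. poisson_obj k P T (Phi k r w)) = (\<lambda>w. \<Sum>x\<in>I. (\<lambda>x t. ereal t + neg_T_log (T x) t) x (Phi k r w x))"
        unfolding poisson_obj_def I_def by simp
      show "continuous_on (Kset k r P R M) (\<lambda>w. poisson_obj k P T (Phi k r w))"
        unfolding e
      proof (rule cont_sum_ereal[OF Ifin _ contPhi Phinn])
        show "\<And>x. x \<in> I \<Longrightarrow> continuous_on {0..} (\<lambda>t. ereal t + neg_T_log (T x) t)"
          using Tnn poisson_cont by blast
        show "\<And>x t. ereal t + neg_T_log (T x) t \<noteq> - \<infinity>" by (simp add: neg_T_log_def)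
      qed
      show "\<forall>\<theta>\<in>N. \<exists>w\<in>Kset k r P R M. poisson_obj k P T (Phi k r w) \<le> poisson_obj k P T \<theta>"
      proof
        fix \<theta> assume th: "\<theta> \<in> N"
        show "\<exists>w\<in>Kset k r P R M. poisson_obj k P T (Phi k r w) \<le> poisson_obj k P T \<theta>"
        proof (cases "\<forall>x\<in>I. \<theta> x \<le> M")
          case True
          then obtain w where "w \<in> Kset k r P R M" "\<forall>x\<in>I. Phi k r w x = \<theta> x" using repr th M1 by blast
          then show ?thesis using Feq by (metis order_refl)
        next
          case False
          then obtain x0 where x0: "x0 \<in> I" "\<theta> x0 > M" by (auto simp: not_le)
          obtain w where w: "w \<in> Kset k r P R M" "\<forall>x\<in>I. Phi k r w x = 1" using const[of 1 M] M1 by auto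
          have "poisson_obj k P T (Phi k r w) = (\<Sum>x\<in>I. ereal 1)"
            unfolding poisson_obj_def I_def[symmetric] using w by (intro sum.cong) (auto simp: neg_T_log_def)
          also have "\<dots> = ereal (real (card I))" by simp
          also have "\<dots> \<le> ereal (\<theta> x0 / 2 - 2 * B)" using x0 unfolding M_def by simp
          also have "ereal (\<theta> x0 / 2 - 2 * B) \<le> ereal (\<Sum>x\<in>I. \<theta> x / 2 - 2 * (T x)^2)"
          proof -
            have "\<theta> x0 \<le> (\<Sum>x\<in>I. \<theta> x)" using Ifin x0 Nnn th by (intro member_le_sum) auto
            then show ?thesis
              unfolding B_def by (simp add: sum_subtractf sum_divide_distrib[symmetric] sum_distrib_left)
          qed
          also have "\<dots> = (\<Sum>x\<in>I. ereal (\<theta> x / 2 - 2 * (T x)^2))" by simp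
          also have "\<dots> \<le> poisson_obj k P T \<theta>"
            unfolding poisson_obj_def I_def[symmetric]
            using Tnn Nnn th by (intro sum_mono poisson_lb) auto
          finally show ?thesis using w by blast
        qed
      qed
    qed
  qed

  have part4: "has_minimizer (expon_obj k P T) N"
    if Tp: "\<forall>x\<in>I. 0 < T x"
  proof -
    define ST where "ST = (\<Sum>x\<in>I. T x)"
    define L where "L = (\<Sum>x\<in>I. \<bar>ln (T x) + 1\<bar>)"
    define M where "M = exp (ST + L) + 1"
    have M1: "M \<ge> 1" by (simp add: M_def)
    define g where "g x t = (if t = 0 then \<infinity> else ereal (ln t + T x / t))" for x t
    have Fe: "expon_obj k P T \<theta> = (\<Sum>x\<in>I. g x (\<theta> x))" for \<theta>
      unfolding expon_obj_def g_def I_def ..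
    have Feq: "expon_obj k P T \<theta> = expon_obj k P T \<theta>'" if "\<forall>x\<in>I. \<theta> x = \<theta>' x" for \<theta> \<theta>'
      unfolding Fe using that by simp
    show ?thesis
    proof (rule min_via_compact[where K = "Kset k r P R M" and \<Phi> = "Phi k r"])
      show "compact (Kset k r P R M)" by (rule compact_Kset)
      show "Kset k r P R M \<noteq> {}" using const[of 0 M] M1 by auto
      show "Phi k r ` Kset k r P R M \<subseteq> N" using PhiN by blast
      show "continuous_on (Kset k r P R M) (\<lambda>w. expon_obj k P T (Phi k r w))"
        unfolding Fe
      proof (rule cont_sum_ereal[OF Ifin _ contPhi Phinn])
        show "\<And>x. x \<in> I \<Longrightarrow> continuous_on {0..} (g x)"
          unfolding g_def using Tp expo_cont by blast
        show "\<And>x t. g x t \<noteq> - \<infinity>" by (simp add: g_def)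
      qed
      show "\<forall>\<theta>\<in>N. \<exists>w\<in>Kset k r P R M. expon_obj k P T (Phi k r w) \<le> expon_obj k P T \<theta>"
      proof
        fix \<theta> assume th: "\<theta> \<in> N"
        show "\<exists>w\<in>Kset k r P R M. expon_obj k P T (Phi k r w) \<le> expon_obj k P T \<theta>"
        proof (cases "\<forall>x\<in>I. \<theta> x \<le> M")
          case True
          then obtain w where "w \<in> Kset k r P R M" "\<forall>x\<in>I. Phi k r w x = \<theta> x" using repr th M1 by blast
          then show ?thesis using Feq by (metis order_refl)
        next
          case False
          then obtain x0 where x0: "x0 \<in> I" "\<theta> x0 > M" by (auto simp: not_le)
          have pos0: "\<theta> x0 > 0" using x0 M1 by linarith
          obtain w where w: "w \<in> Kset k r P R M" "\<forall>x\<in>I. Phi k r w x = 1" using const[of 1 M] M1 by auto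
          have e1: "expon_obj k P T (Phi k r w) = (\<Sum>x\<in>I. ereal (T x))"
            unfolding Fe using w by (intro sum.cong) (auto simp: g_def)
          have e2: "(\<Sum>x\<in>I. ereal (T x)) = ereal ST" by (simp add: ST_def)
          have "ST + L < ln (\<theta> x0)"
          proof -
            have "exp (ST + L) < \<theta> x0" using x0 unfolding M_def by simp
            then show ?thesis using pos0 by (metis exp_less_cancel_iff exp_ln)
          qed
          then have c: "ereal ST \<le> ereal (ln (\<theta> x0)) + ereal (- L)" by simp
          have a: "ereal (ln (\<theta> x0)) \<le> g x0 (\<theta> x0)"
          proof -
            have "0 \<le> T x0 / \<theta> x0" using Tp x0 pos0 by (intro divide_nonneg_pos) auto
            then show ?thesis using pos0 by (simp add: g_def)
          qed
          have b: "ereal (- L) \<le> (\<Sum>x\<in>I - {x0}. g x (\<theta> x))"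
          proof -
            have "- L \<le> - (\<Sum>x\<in>I - {x0}. \<bar>ln (T x) + 1\<bar>)"
              unfolding L_def using Ifin by (intro le_imp_neg_le sum_mono2) auto
            also have "\<dots> \<le> (\<Sum>x\<in>I - {x0}. ln (T x) + 1)"
              unfolding sum_negf[symmetric] by (intro sum_mono) auto
            finally have "ereal (- L) \<le> (\<Sum>x\<in>I - {x0}. ereal (ln (T x) + 1))" by simp
            also have "\<dots> \<le> (\<Sum>x\<in>I - {x0}. g x (\<theta> x))"
            proof (rule sum_mono)
              fix x assume x: "x \<in> I - {x0}"
              show "ereal (ln (T x) + 1) \<le> g x (\<theta> x)"
              proof (cases "\<theta> x = 0")
                case True then show ?thesis by (simp add: g_def)
              next
                case False
                then have "\<theta> x > 0" using Nnn th x by force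
                then show ?thesis using expo_lb[of "T x" "\<theta> x"] Tp x False by (simp add: g_def)
              qed
            qed
            finally show ?thesis .
          qed
          have d: "g x0 (\<theta> x0) + (\<Sum>x\<in>I - {x0}. g x (\<theta> x)) = expon_obj k P T \<theta>"
            unfolding Fe using Ifin x0 by (simp add: sum.remove)
          have "expon_obj k P T (Phi k r w) \<le> ereal (ln (\<theta> x0)) + ereal (- L)" using e1 e2 c by simp
          also have "\<dots> \<le> g x0 (\<theta> x0) + (\<Sum>x\<in>I - {x0}. g x (\<theta> x))" by (rule add_mono[OF a b])
          also have "\<dots> = expon_obj k P T \<theta>" by (rule d)
          finally show ?thesis using w by blast
        qed
      qed
    qed
  qed

  have p2: "\<forall>n::nat. (\<forall>x\<in>I. T x \<in> \<nat>) \<and> (\<Sum>x\<in>I. T x) = real n \<longrightarrow>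
          has_minimizer (multinom_obj k P T) (N \<inter> prob_simplex k P)"
    using part2 by blast
  have p3: "(\<forall>x\<in>I. T x \<in> \<nat>) \<longrightarrow> has_minimizer (poisson_obj k P T) N"
    using part3 by blast
  have p4: "(\<forall>x\<in>I. 0 < T x) \<longrightarrow> has_minimizer (expon_obj k P T) N"
    using part4 by blast
  show ?thesis
    using part1 p2 p3 p4 unfolding N_def I_def by (intro conjI)
qed

end
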